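(* Let $\Omega$ be a set, let $\Phi$ be the family consisting of all coherent sets of gambles on $\Omega$ together with $\mathcal{L}(\Omega)$, and let $At(\Phi)$ be its set of atoms (maximal coherent sets). For all $M,M'\in At(\Phi)$ and every $x\in Q$, $$M\equiv_x M' \iff \epsilon_x(M)=\epsilon_x(M') \iff M,M'\in At(\epsilon_x(M)).$$ Consequently, for all $x,y\in Q$: $At_x\le At_y$ if and only if $At(\epsilon_x(M))\supseteq At(\epsilon_y(M))$ for every $M\in At(\Phi)$.
   Context: A gamble on $\Omega$ is a bounded function $f:\Omega\to\mathbb{R}$; $\mathcal{L}(\Omega)$ is the set of all gambles and $\mathcal{L}^+(\Omega)=\{f\in\mathcal{L}(\Omega): f\ge 0, f\ne 0\}$. A set $\mathcal{D}\subseteq\mathcal{L}(\Omega)$ is coherent if (D1) $\mathcal{L}^+(\Omega)\subseteq\mathcal{D}$, (D2) $0\notin\mathcal{D}$, (D3) $f,g\in\mathcal{D}\Rightarrow f+g\in\mathcal{D}$, (D4) $f\in\mathcal{D},\lambda>0\Rightarrow\lambda f\in\mathcal{D}$. $\Phi$ is the set of coherent sets together with $\mathcal{L}(\Omega)$; for $\mathcal{K}\subseteq\mathcal{L}(\Omega)$ put $\mathcal{C}(\mathcal{K})=\bigcap\{\mathcal{D}\in\Phi:\mathcal{K}\subseteq\mathcal{D}\}$. Questions: $Q$ is an index set, each $x\in Q$ corresponds to a partition $\mathcal{P}_x$ of $\Omega$ (equivalence relation $\equiv_x$), and $\{\mathcal{P}_x:x\in Q\}$ is closed under join, where partitions are ordered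 by $\mathcal{P}_x\le\mathcal{P}_y$ iff every block of $\mathcal{P}_y$ is contained in a block of $\mathcal{P}_x$, and the join is the partition of nonempty intersections of blocks. A gamble is $x$-measurable if it is constant on each block of $\mathcal{P}_x$; $\mathcal{L}_x$ denotes the set of $x$-measurable gambles. Extraction: $\epsilon_x(\mathcal{D})=\mathcal{C}(\mathcal{D}\cap\mathcal{L}_x)$ for $\mathcal{D}\in\Phi$. Atoms of $\Phi$ are the maximal coherent sets (coherent sets not properly contained in another coherent set); $At(\Phi)$ denotes the set of all of them, and for $\mathcal{D}\in\Phi$, $At(\mathcal{D})=\{M\in At(\Phi):\mathcal{D}\subseteq M\}$. For $x\in Q$, the sets $At(\epsilon_x(M))$, $M\in At(\Phi)$, form a partition $At_x$ of $At(\Phi)$ (known from prior work); $M\equiv_x M'$ means $M$ and $M'$ lie in the same block of $At_x$, i.e. there is $M''\in At(\Phi)$ with $M,M'\in At(\epsilon_x(M''))$. Partitions of $At(\Phi)$ are ordered by $At_x\le At_y$ iff $M\equiv_y M'$ implies $M\equiv_x M'$ for all $M,M'\in At(\Phi)$. *)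

theory Defs
  imports Complex_Main
begin

text \<open>Gambles on the type 'a (playing the role of Omega): bounded real functions.\<close>
definition gambles :: "('a \<Rightarrow> real) set" where
  "gambles = {f. \<exists>B. \<forall>w. \<bar>f w\<bar> \<le> B}"

definition pos_gambles :: "('a \<Rightarrow> real) set" where
  "pos_gambles = {f \<in> gambles. (\<forall>w. f w \<ge> 0) \<and> f \<noteq> (\<lambda>_. 0)}"

definition coherent :: "('a \<Rightarrow> real) set \<Rightarrow> bool" where
  "coherent D \<longleftrightarrow> D \<subseteq> gambles \<and>
     pos_gambles \<subseteq> D \<and>
     (\<lambda>_. 0) \<notin> D \<and>
     (\<forall>f\<in>D. \<forall>g\<in>D. (\<lambda>w. f w + g w) \<in> D) \<and>
     (\<forall>f\<in>D. \<forall>c::real. c > 0 \<longrightarrow> (\<lambda>w. c * f w) \<in> D)"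

definition Phi :: "('a \<Rightarrow> real) set set" where
  "Phi = {D. coherent D} \<union> {gambles}"

definition closure_C :: "('a \<Rightarrow> real) set \<Rightarrow> ('a \<Rightarrow> real) set" where
  "closure_C K = \<Inter>{D \<in> Phi. K \<subseteq> D}"

text \<open>Questions: each x is associated with an equivalence relation part x on Omega
  (whose classes are the blocks of the partition P_x).\<close>
definition questions :: "'q set \<Rightarrow> ('q \<Rightarrow> ('a \<times> 'a) set) \<Rightarrow> bool" where
  "questions Q part \<longleftrightarrow>
     (\<forall>x\<in>Q. equiv UNIV (part x)) \<and>
     (\<forall>x\<in>Q. \<forall>y\<in>Q. \<exists>z\<in>Q. part z = part x \<inter> part y)"

definition measurable_gambles :: "('a \<times> 'a) set \<Rightarrow> ('a \<Rightarrow> real) set" where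
  "measurable_gambles R = {f \<in> gambles. \<forall>w w'. (w, w') \<in> R \<longrightarrow> f w = f w'}"

definition extraction :: "('a \<times> 'a) set \<Rightarrow> ('a \<Rightarrow> real) set \<Rightarrow> ('a \<Rightarrow> real) set" where
  "extraction R D = closure_C (D \<inter> measurable_gambles R)"

definition atoms :: "('a \<Rightarrow> real) set set" where
  "atoms = {M. coherent M \<and> (\<forall>D. coherent D \<and> M \<subseteq> D \<longrightarrow> D = M)}"

definition atoms_of :: "('a \<Rightarrow> real) set \<Rightarrow> ('a \<Rightarrow> real) set set" where
  "atoms_of D = {M \<in> atoms. D \<subseteq> M}"

definition atom_equiv :: "('a \<times> 'a) set \<Rightarrow> ('a \<Rightarrow> real) set \<Rightarrow> ('a \<Rightarrow> real) set \<Rightarrow> bool" where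
  "atom_equiv R M M' \<longleftrightarrow> (\<exists>M''\<in>atoms. M \<in> atoms_of (extraction R M'') \<and> M' \<in> atoms_of (extraction R M''))"

definition atoms_partition_le :: "('a \<times> 'a) set \<Rightarrow> ('a \<times> 'a) set \<Rightarrow> bool" where
  "atoms_partition_le Rx Ry \<longleftrightarrow>
     (\<forall>M\<in>atoms. \<forall>M'\<in>atoms. atom_equiv Ry M M' \<longrightarrow> atom_equiv Rx M M')"

end

theory Submission
  imports Defs
begin

lemma gam_add: "f \<in> gambles \<Longrightarrow> g \<in> gambles \<Longrightarrow> (\<lambda>w. f w + g w) \<in> gambles"
proof -
  assume "f \<in> gambles" "g \<in> gambles"
  then obtain B1 B2 where "\<forall>w. \<bar>f w\<bar> \<le> B1" "\<forall>w. \<bar>g w\<bar> \<le> B2" by (auto simp: gambles_def)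
  then have "\<forall>w. \<bar>f w + g w\<bar> \<le> B1 + B2" by (meson abs_triangle_ineq add_mono order_trans)
  then show ?thesis by (auto simp: gambles_def)
qed

lemma gam_scale: "f \<in> gambles \<Longrightarrow> (\<lambda>w. c * f w) \<in> gambles"
proof -
  assume "f \<in> gambles"
  then obtain B where B: "\<forall>w. \<bar>f w\<bar> \<le> B" by (auto simp: gambles_def)
  have "\<forall>w. \<bar>c * f w\<bar> \<le> \<bar>c\<bar> * B"
    using B by (simp add: abs_mult mult_left_mono)
  then show ?thesis by (auto simp: gambles_def)
qed

lemma gam_zero: "(\<lambda>_. 0) \<in> gambles"
  by (auto simp: gambles_def)

lemma atom_neg:
  assumes M: "M \<in> atoms" and fg: "f \<in> gambles" and f0: "f \<noteq> (\<lambda>_. 0)" and fM: "f \<notin> M"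
  shows "(\<lambda>w. - f w) \<in> M"
proof (rule ccontr)
  assume nf: "(\<lambda>w. - f w) \<notin> M"
  have cM: "coherent M" using M by (auto simp: atoms_def)
  have Mg: "M \<subseteq> gambles" and Mp: "pos_gambles \<subseteq> M" and M0: "(\<lambda>_. 0) \<notin> M"
    and Madd: "\<And>a b. a \<in> M \<Longrightarrow> b \<in> M \<Longrightarrow> (\<lambda>w. a w + b w) \<in> M"
    and Msc: "\<And>a c. a \<in> M \<Longrightarrow> c > 0 \<Longrightarrow> (\<lambda>w. c * a w) \<in> M"
    using cM by (auto simp: coherent_def)
  define D where "D = M \<union> {h. \<exists>c>0. \<exists>g\<in>insert (\<lambda>_. 0) M. h = (\<lambda>w. c * f w + g w)}"
  have insg: "insert (\<lambda>_. 0) M \<subseteq> gambles" using Mg gam_zero by auto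
  have insadd: "(\<lambda>w. a w + b w) \<in> insert (\<lambda>_. 0) M" if "a \<in> insert (\<lambda>_. 0) M" "b \<in> insert (\<lambda>_. 0) M" for a b
    using that Madd by auto
  have inssc: "(\<lambda>w. c * a w) \<in> insert (\<lambda>_. 0) M" if "a \<in> insert (\<lambda>_. 0) M" "c > 0" for a c
    using that Msc by auto
  have inD: "(\<lambda>w. c * f w + g w) \<in> D" if "c > 0" "g \<in> insert (\<lambda>_. 0) M" for c g
    unfolding D_def
    apply (rule UnI2, rule CollectI, rule exI[of _ c])
    using that by auto
  have Dcases: "P" if "h \<in> D" "h \<in> M \<Longrightarrow> P"
     "\<And>c g. c > 0 \<Longrightarrow> g \<in> insert (\<lambda>_. 0) M \<Longrightarrow> h = (\<lambda>w. c * f w + g w) \<Longrightarrow> P" for h P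
    using that unfolding D_def by blast
  have "coherent D"
    unfolding coherent_def
  proof (intro conjI ballI allI impI)
    show "D \<subseteq> gambles"
    proof
      fix h assume "h \<in> D"
      then show "h \<in> gambles"
        unfolding D_def using Mg insg gam_add gam_scale fg by blast
    qed
    show "pos_gambles \<subseteq> D" using Mp D_def by auto
    show "(\<lambda>_. 0) \<notin> D"
    proof
      assume "(\<lambda>_. 0) \<in> D"
      then obtain c g where c: "c > 0" and g: "g \<in> insert (\<lambda>_. 0) M"
        and e: "(\<lambda>_. 0::real) = (\<lambda>w. c * f w + g w)"
        using M0 unfolding D_def by blast
      have ew: "\<And>w. c * f w + g w = 0" using e by metis
      show False
      proof (cases "g = (\<lambda>_. 0)")
        case True
        then have "\<And>w. f w = 0" using ew c by simp
        then show False using f0 by auto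
      next
        case False
        then have gM: "g \<in> M" using g by auto
        have "(\<lambda>w. (1/c) * g w) = (\<lambda>w. - f w)"
        proof
          fix w have "g w = - (c * f w)" using ew[of w] by linarith
          then show "(1/c) * g w = - f w" using c by simp
        qed
        then show False using Msc[OF gM, of "1/c"] c nf by simp
      qed
    qed
    fix a b assume a: "a \<in> D" and b: "b \<in> D"
    show "(\<lambda>w. a w + b w) \<in> D"
    proof -
      { assume "a \<in> M" "b \<in> M" then have ?thesis using Madd D_def by auto }
      moreover
      { fix c g assume "a \<in> M" "c > 0" "g \<in> insert (\<lambda>_. 0) M" "b = (\<lambda>w. c * f w + g w)"
        then have e: "(\<lambda>w. a w + b w) = (\<lambda>w. c * f w + (\<lambda>w. g w + a w) w)"
          "(\<lambda>w. g w + a w) \<in> insert (\<lambda>_. 0) M"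
          using insadd[of g a] by auto
        have ?thesis unfolding e(1) by (rule inD[OF \<open>c > 0\<close> e(2)]) }
      moreover
      { fix c g assume "b \<in> M" "c > 0" "g \<in> insert (\<lambda>_. 0) M" "a = (\<lambda>w. c * f w + g w)"
        then have e: "(\<lambda>w. a w + b w) = (\<lambda>w. c * f w + (\<lambda>w. g w + b w) w)"
          "(\<lambda>w. g w + b w) \<in> insert (\<lambda>_. 0) M"
          using insadd[of g b] by auto
        have ?thesis unfolding e(1) by (rule inD[OF \<open>c > 0\<close> e(2)]) }
      moreover
      { fix c g c' g' assume "c > 0" "g \<in> insert (\<lambda>_. 0) M" "a = (\<lambda>w. c * f w + g w)"
          "c' > 0" "g' \<in> insert (\<lambda>_. 0) M" "b = (\<lambda>w. c' * f w + g' w)"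
        then have e: "(\<lambda>w. a w + b w) = (\<lambda>w. (c + c') * f w + (\<lambda>w. g w + g' w) w)"
          "(\<lambda>w. g w + g' w) \<in> insert (\<lambda>_. 0) M" "c + c' > 0"
          using insadd[of g g'] by (auto simp: algebra_simps)
        have ?thesis unfolding e(1) by (rule inD[OF e(3) e(2)]) }
      ultimately show ?thesis
        apply -
        apply (rule Dcases[OF a]; rule Dcases[OF b])
        apply blast+
        done
    qed
  next
    fix a and c :: real assume a: "a \<in> D" and c: "c > 0"
    show "(\<lambda>w. c * a w) \<in> D"
    proof -
      { assume "a \<in> M" then have ?thesis using Msc c D_def by auto }
      moreover
      { fix d g assume "d > 0" "g \<in> insert (\<lambda>_. 0) M" "a = (\<lambda>w. d * f w + g w)"
        then have e: "(\<lambda>w. c * a w) = (\<lambda>w. (c * d) * f w + (\<lambda>w. c * g w) w)"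
          "(\<lambda>w. c * g w) \<in> insert (\<lambda>_. 0) M" "c * d > 0"
          using inssc[of g c] c by (auto simp: algebra_simps)
        have ?thesis unfolding e(1) by (rule inD[OF e(3) e(2)]) }
      ultimately show ?thesis by (rule Dcases[OF a]) blast+
    qed
  qed
  moreover have "M \<subseteq> D" using D_def by auto
  ultimately have "D = M" using M by (auto simp: atoms_def)
  moreover have "f \<in> D"
  proof -
    have "(\<lambda>w. 1 * f w + (\<lambda>_. 0) w) \<in> D" by (rule inD) auto
    then show ?thesis by simp
  qed
  ultimately show False using fM by simp
qed

lemma closure_sub: "D \<in> Phi \<Longrightarrow> K \<subseteq> D \<Longrightarrow> closure_C K \<subseteq> D"
  unfolding closure_C_def by blast

lemma closure_sup: "K \<subseteq> closure_C K"
  unfolding closure_C_def by blast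

lemma E_sub: "M \<in> atoms \<Longrightarrow> extraction R M \<subseteq> M"
  unfolding extraction_def
  by (rule closure_sub) (auto simp: atoms_def Phi_def)

lemma key:
  assumes A: "A \<in> atoms" and B: "B \<in> atoms" and s: "extraction R A \<subseteq> B"
  shows "extraction R A = extraction R B"
proof -
  have AB: "A \<inter> measurable_gambles R \<subseteq> B \<inter> measurable_gambles R"
  proof -
    have "A \<inter> measurable_gambles R \<subseteq> extraction R A"
      unfolding extraction_def by (rule closure_sup)
    then show ?thesis using s by auto
  qed
  have BA: "B \<inter> measurable_gambles R \<subseteq> A"
  proof
    fix f assume f: "f \<in> B \<inter> measurable_gambles R"
    show "f \<in> A"
    proof (rule ccontr)
      assume fA: "f \<notin> A"
      have cB: "coherent B" using B unfolding atoms_def by simp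
      have B0: "(\<lambda>_. 0) \<notin> B" and Badd: "\<And>a b. a \<in> B \<Longrightarrow> b \<in> B \<Longrightarrow> (\<lambda>w. a w + b w) \<in> B"
        using cB unfolding coherent_def by auto
      have fg: "f \<in> gambles" using f by (auto simp: measurable_gambles_def)
      have f0: "f \<noteq> (\<lambda>_. 0)" using f B0 by auto
      have nA: "(\<lambda>w. - f w) \<in> A" using atom_neg[OF A fg f0 fA] .
      have "(\<lambda>w. - f w) \<in> gambles" using gam_scale[OF fg, of "-1"] by simp
      then have "(\<lambda>w. - f w) \<in> measurable_gambles R"
        using f unfolding measurable_gambles_def by simp
      then have "(\<lambda>w. - f w) \<in> B" using AB nA by blast
      then have "(\<lambda>w. f w + - f w) \<in> B" using f Badd by blast
      then show False using B0 by simp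
    qed
  qed
  have "A \<inter> measurable_gambles R = B \<inter> measurable_gambles R" using AB BA by blast
  then show ?thesis unfolding extraction_def by simp
qed

lemma self_atom: "M \<in> atoms \<Longrightarrow> M \<in> atoms_of (extraction R M)"
  using E_sub unfolding atoms_of_def by blast

lemma equiv_iff:
  assumes M: "M \<in> atoms" and M': "M' \<in> atoms"
  shows "atom_equiv R M M' \<longleftrightarrow> extraction R M \<subseteq> M'"
proof
  assume "atom_equiv R M M'"
  then obtain N where N: "N \<in> atoms" "extraction R N \<subseteq> M" "extraction R N \<subseteq> M'"
    by (auto simp: atom_equiv_def atoms_of_def)
  then show "extraction R M \<subseteq> M'" using key[OF N(1) M N(2)] by simp
next
  assume "extraction R M \<subseteq> M'"
  then show "atom_equiv R M M'"
    unfolding atom_equiv_def using M M' self_atom[OF M] by (auto simp: atoms_of_def)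
qed

lemma eq_iff:
  assumes M: "M \<in> atoms" and M': "M' \<in> atoms"
  shows "extraction R M = extraction R M' \<longleftrightarrow> extraction R M \<subseteq> M'"
proof
  assume "extraction R M = extraction R M'"
  then show "extraction R M \<subseteq> M'" using E_sub[OF M'] by simp
next
  assume "extraction R M \<subseteq> M'"
  then show "extraction R M = extraction R M'" by (rule key[OF M M'])
qed

theorem lemma1:
  fixes Q :: "'q set" and part :: "'q \<Rightarrow> ('a \<times> 'a) set"
  assumes "questions Q part"
  shows "(\<forall>x\<in>Q. \<forall>M\<in>atoms. \<forall>M'\<in>atoms.
            (atom_equiv (part x) M M' \<longleftrightarrow> extraction (part x) M = extraction (part x) M') \<and>
            (extraction (part x) M = extraction (part x) M' \<longleftrightarrow>
               M \<in> atoms_of (extraction (part x) M) \<and> M' \<in> atoms_of (extraction (part x) M)))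
       \<and> (\<forall>x\<in>Q. \<forall>y\<in>Q. atoms_partition_le (part x) (part y) \<longleftrightarrow>
            (\<forall>M\<in>atoms. atoms_of (extraction (part y) M) \<subseteq> atoms_of (extraction (part x) M)))"
proof (intro conjI ballI)
  fix x and M M' :: "('a \<Rightarrow> real) set" assume M: "M \<in> atoms" and M': "M' \<in> atoms"
  show "atom_equiv (part x) M M' \<longleftrightarrow> extraction (part x) M = extraction (part x) M'"
    using equiv_iff[OF M M'] eq_iff[OF M M'] by simp
  show "extraction (part x) M = extraction (part x) M' \<longleftrightarrow>
               M \<in> atoms_of (extraction (part x) M) \<and> M' \<in> atoms_of (extraction (part x) M)"
    using eq_iff[OF M M'] self_atom[OF M] M' by (auto simp: atoms_of_def)
next
  fix x y assume "x \<in> Q" "y \<in> Q"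
  have AE: "\<And>R M M'. M \<in> atoms \<Longrightarrow> M' \<in> atoms \<Longrightarrow>
     atom_equiv R M M' \<longleftrightarrow> M' \<in> atoms_of (extraction R M)"
    using equiv_iff by (auto simp: atoms_of_def)
  show "atoms_partition_le (part x) (part y) \<longleftrightarrow>
            (\<forall>M\<in>atoms. atoms_of (extraction (part y) M) \<subseteq> atoms_of (extraction (part x) M))"
    unfolding atoms_partition_le_def
  proof
    assume h: "\<forall>M\<in>atoms. \<forall>M'\<in>atoms. atom_equiv (part y) M M' \<longrightarrow> atom_equiv (part x) M M'"
    show "\<forall>M\<in>atoms. atoms_of (extraction (part y) M) \<subseteq> atoms_of (extraction (part x) M)"
    proof (intro ballI subsetI)
      fix M M' assume M: "M \<in> atoms" and "M' \<in> atoms_of (extraction (part y) M)"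
      then have M': "M' \<in> atoms" "M' \<in> atoms_of (extraction (part y) M)" by (auto simp: atoms_of_def)
      then show "M' \<in> atoms_of (extraction (part x) M)" using h M AE by blast
    qed
  next
    assume h: "\<forall>M\<in>atoms. atoms_of (extraction (part y) M) \<subseteq> atoms_of (extraction (part x) M)"
    show "\<forall>M\<in>atoms. \<forall>M'\<in>atoms. atom_equiv (part y) M M' \<longrightarrow> atom_equiv (part x) M M'"
      using h AE by blast
  qed
qed

end
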